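(* Let $\lambda\in(0,1/e)$, $\gamma>0$, $A\subset\mathbb{C}$, and let $f$ be a bilipschitz mapping, i.e. there exist $0<c<C<\infty$ with $c\leq|f(x)-f(y)|/|x-y|\leq C$ for all $x\neq y$. If $\mathcal{H}^{h_{\lambda,\gamma}}(A)=0$, then $\mathcal{H}^{h_{\lambda,\gamma}}(f(A))=0$; if $\mathcal{H}^{h_{\lambda,\gamma}}(A)=\infty$, then $\mathcal{H}^{h_{\lambda,\gamma}}(f(A))=\infty$.
   Context: For $\lambda\in(0,1/e)$ let $E_\lambda(z)=\lambda e^z$; it has a unique real repelling fixed point $\beta_\lambda$. Let $L_\lambda$ be the entire function with $L_\lambda(0)=\beta_\lambda$, $L_\lambda'(0)=1$ and $E_\lambda(L_\lambda(z))=L_\lambda(\beta_\lambda z)$ for all $z$, and let $\Phi_\lambda=(L_\lambda|_{\mathbb{R}})^{-1}$ (an increasing function tending to $\infty$). The gauge function is $h_{\lambda,\gamma}(t)=t^2\Phi_\lambda(1/t)^\gamma$ for small $t>0$ and $h_{\lambda,\gamma}(0)=0$. For a gauge function $h$ and $A\subset\mathbb{C}$, $\mathcal{H}^h(A)=\lim_{\delta\to0}\inf\{\sum_i h(\operatorname{diam}A_i): A\subset\bigcup_i A_i,\ \operatorname{diam}A_i<\delta\}$. *)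

theory Defs
  imports "HOL-Analysis.Analysis" "HOL-Complex_Analysis.Complex_Analysis"
begin

definition E_map :: "real \<Rightarrow> complex \<Rightarrow> complex" where
  "E_map lam z = complex_of_real lam * exp z"

text \<open>The unique real repelling fixed point of E_lambda (repelling: |E_lambda'(x)| > 1).\<close>
definition beta_fp :: "real \<Rightarrow> real" where
  "beta_fp lam = (THE x::real. lam * exp x = x \<and> \<bar>lam * exp x\<bar> > 1)"

definition L_lin :: "real \<Rightarrow> complex \<Rightarrow> complex" where
  "L_lin lam = (THE L. L holomorphic_on UNIV \<and> L 0 = complex_of_real (beta_fp lam)
      \<and> deriv L 0 = 1
      \<and> (\<forall>z. E_map lam (L z) = L (complex_of_real (beta_fp lam) * z)))"

definition Phi_inv :: "real \<Rightarrow> real \<Rightarrow> real" where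
  "Phi_inv lam t = (THE s::real. L_lin lam (complex_of_real s) = complex_of_real t)"

definition gauge_h :: "real \<Rightarrow> real \<Rightarrow> real \<Rightarrow> real" where
  "gauge_h lam gam t = (if t \<le> 0 then 0 else t\<^sup>2 * (Phi_inv lam (1 / t)) powr gam)"

text \<open>Generalized Hausdorff measure with gauge h on subsets of the plane:
  limit as delta -> 0 (a monotone limit, i.e. the supremum over delta > 0) of the infimum
  over countable covers by (bounded) sets of diameter < delta.\<close>
definition hausdorff_gauge :: "(real \<Rightarrow> real) \<Rightarrow> complex set \<Rightarrow> ennreal" where
  "hausdorff_gauge h A = (SUP \<delta>\<in>{0<..}.
     INF S\<in>{S :: nat \<Rightarrow> complex set. A \<subseteq> (\<Union>i. S i) \<and>
                 (\<forall>i. bounded (S i) \<and> diameter (S i) < \<delta>)}.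
        (\<Sum>i. ennreal (h (diameter (S i)))))"

definition bilipschitz :: "(complex \<Rightarrow> complex) \<Rightarrow> bool" where
  "bilipschitz f \<longleftrightarrow> (\<exists>c C. 0 < c \<and> c < C \<and>
     (\<forall>x y. x \<noteq> y \<longrightarrow> c \<le> cmod (f x - f y) / cmod (x - y) \<and> cmod (f x - f y) / cmod (x - y) \<le> C))"

end

theory Submission
  imports Defs
begin

lemma mult_INF_ennreal:
  fixes m :: ennreal and F :: "'a \<Rightarrow> ennreal"
  assumes "m < top" "m \<noteq> 0"
  shows "m * (INF x\<in>C. F x) = (INF x\<in>C. m * F x)"
proof (cases "C = {}")
  case True then show ?thesis using assms by (simp add: ennreal_mult_top)
next
  case False
  have "(\<lambda>x. m * x) (Inf (F ` C)) = Inf ((\<lambda>x. m * x) ` (F ` C))"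
  proof (rule continuous_at_Inf_mono)
    show "mono ((*) m)" by (simp add: mono_def mult_left_mono)
    show "continuous (at_right (Inf (F ` C))) ((*) m)"
    proof -
      have "continuous_on UNIV ((*) m)" using ennreal_continuous_on_cmult[OF assms(1) continuous_on_id] by simp
      then show ?thesis
        by (meson continuous_at_imp_continuous_at_within continuous_on_eq_continuous_within iso_tuple_UNIV_I)
    qed
    show "F ` C \<noteq> {}" using False by auto
    show "bdd_below (F ` C)" by simp
  qed
  then show ?thesis by (simp add: image_image)
qed

lemma haus_lip:
  fixes g :: "complex \<Rightarrow> complex" and h :: "real \<Rightarrow> real"
  assumes lip: "\<And>x y. x \<in> A \<Longrightarrow> y \<in> A \<Longrightarrow> norm (g x - g y) \<le> K * norm (x - y)"
    and K: "K \<ge> 1" and M: "M > 0" and d0: "d0 > 0" and h0: "h 0 = 0" and hpos: "\<And>t. h t \<ge> 0"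
    and hgrow: "\<And>d. 0 < d \<Longrightarrow> d < d0 \<Longrightarrow> h (2 * K * d) \<le> M * h d"
  shows "hausdorff_gauge h (g ` A) \<le> ennreal M * hausdorff_gauge h A"
proof -
  define cov where "cov B \<delta> = {S :: nat \<Rightarrow> complex set. B \<subseteq> (\<Union>i. S i) \<and>
                 (\<forall>i. bounded (S i) \<and> diameter (S i) < \<delta>)}" for B \<delta>
  have H: "hausdorff_gauge h B = (SUP \<delta>\<in>{0<..}. INF S\<in>cov B \<delta>. (\<Sum>i. ennreal (h (diameter (S i)))))" for B
    unfolding hausdorff_gauge_def cov_def by simp
  show ?thesis unfolding H
  proof (rule SUP_least)
    fix \<delta> :: real assume "\<delta> \<in> {0<..}"
    hence dp: "\<delta> > 0" by simp
    define \<delta>' where "\<delta>' = min d0 (\<delta> / (2 * K))"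
    have d'p: "\<delta>' > 0" using dp d0 K by (simp add: \<delta>'_def)
    have key: "(INF T\<in>cov (g ` A) \<delta>. (\<Sum>i. ennreal (h (diameter (T i)))))
          \<le> ennreal M * (\<Sum>i. ennreal (h (diameter (S i))))" if S: "S \<in> cov A \<delta>'" for S
    proof -
      define T where "T i = (if S i \<inter> A = {} then {} else
          cball (g (SOME p. p \<in> S i \<inter> A)) (K * diameter (S i)))" for i
      have Sb: "bounded (S i)" "diameter (S i) < \<delta>'" for i using S by (auto simp: cov_def)
      have Sd0: "0 \<le> diameter (S i)" for i using Sb diameter_ge_0 by blast
      have Tc: "T \<in> cov (g ` A) \<delta>"
        unfolding cov_def
      proof (intro CollectI conjI allI)
        show "g ` A \<subseteq> (\<Union>i. T i)"
        proof
          fix y assume "y \<in> g ` A"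
          then obtain x where x: "x \<in> A" "y = g x" by auto
          then obtain i where i: "x \<in> S i" using S by (auto simp: cov_def)
          define p where "p = (SOME p. p \<in> S i \<inter> A)"
          have ne: "S i \<inter> A \<noteq> {}" using i x by auto
          hence p: "p \<in> S i \<inter> A" unfolding p_def by (metis ex_in_conv someI_ex)
          have "norm (g x - g p) \<le> K * norm (x - p)" using lip x p by auto
          also have "\<dots> \<le> K * diameter (S i)"
            using diameter_bounded_bound[OF Sb(1) i, of p] p K by (simp add: dist_norm)
          finally have "g x \<in> cball (g p) (K * diameter (S i))" by (simp add: dist_norm norm_minus_commute)
          then have "y \<in> T i" using ne x unfolding T_def p_def by simp
          then show "y \<in> (\<Union>i. T i)" by auto
        qed
      next
        fix i show "bounded (T i)" by (simp add: T_def)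
      next
        fix i show "diameter (T i) < \<delta>"
        proof (cases "S i \<inter> A = {}")
          case True then show ?thesis using dp by (simp add: T_def)
        next
          case False
          have "2 * (K * diameter (S i)) < 2 * K * \<delta>'" using Sb(2)[of i] K by simp
          also have "\<dots> \<le> 2 * K * (\<delta> / (2 * K))" using K by (intro mult_left_mono) (auto simp: \<delta>'_def)
          also have "\<dots> = \<delta>" using K by simp
          finally show ?thesis using False K Sd0[of i] dp by (simp add: T_def)
        qed
      qed
      have Th: "ennreal (h (diameter (T i))) \<le> ennreal M * ennreal (h (diameter (S i)))" for i
      proof (cases "S i \<inter> A = {} \<or> diameter (S i) = 0")
        case True then show ?thesis using h0 by (auto simp: T_def)
      next
        case False
        hence dpos: "diameter (S i) > 0" using Sd0[of i] by auto
        have "diameter (S i) < d0" using Sb(2)[of i] by (simp add: \<delta>'_def)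
        hence "h (2 * K * diameter (S i)) \<le> M * h (diameter (S i))" using hgrow dpos by blast
        moreover have "diameter (T i) = 2 * K * diameter (S i)" using False K Sd0[of i] by (simp add: T_def not_less)
        ultimately show ?thesis using M hpos by (simp add: ennreal_mult[symmetric] ennreal_leI)
      qed
      have "(INF T\<in>cov (g ` A) \<delta>. (\<Sum>i. ennreal (h (diameter (T i))))) \<le> (\<Sum>i. ennreal (h (diameter (T i))))"
        using Tc by (rule INF_lower)
      also have "\<dots> \<le> (\<Sum>i. ennreal M * ennreal (h (diameter (S i))))"
        using Th by (intro suminf_le) auto
      also have "\<dots> = ennreal M * (\<Sum>i. ennreal (h (diameter (S i))))" by simp
      finally show ?thesis .
    qed
    have "(INF T\<in>cov (g ` A) \<delta>. (\<Sum>i. ennreal (h (diameter (T i)))))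
        \<le> (INF S\<in>cov A \<delta>'. ennreal M * (\<Sum>i. ennreal (h (diameter (S i)))))"
      using key by (rule INF_greatest)
    also have "\<dots> = ennreal M * (INF S\<in>cov A \<delta>'. (\<Sum>i. ennreal (h (diameter (S i)))))"
      using M by (subst mult_INF_ennreal) auto
    also have "\<dots> \<le> ennreal M * (SUP \<delta>\<in>{0<..}. INF S\<in>cov A \<delta>. (\<Sum>i. ennreal (h (diameter (S i)))))"
      using d'p by (intro mult_left_mono SUP_upper) auto
    finally show "(INF T\<in>cov (g ` A) \<delta>. (\<Sum>i. ennreal (h (diameter (T i)))))
        \<le> ennreal M * (SUP \<delta>\<in>{0<..}. INF S\<in>cov A \<delta>. (\<Sum>i. ennreal (h (diameter (S i)))))" .
  qed
qed

lemma beta_unique_aux: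
  fixes lam x1 x2 :: real
  assumes lam: "0 < lam" and x1: "lam * exp x1 = x1" "x1 > 1" and x2: "lam * exp x2 = x2" "x2 > 1"
  shows "x1 = x2"
proof (rule ccontr)
  assume ne: "x1 \<noteq> x2"
  have main: False if a: "lam * exp a = a" "a > 1" "lam * exp b = b" "a < b" for a b :: real
  proof -
    define d where "d = b - a"
    have dp: "d > 0" using a(4) by (simp add: d_def)
    have "exp b = exp a * exp d" by (simp add: d_def flip: exp_add)
    hence "b = a * exp d" using a(1,3) by (metis mult.assoc)
    hence "d = a * (exp d - 1)" by (simp add: d_def algebra_simps)
    moreover have "exp d - 1 \<ge> d" using exp_ge_add_one_self[of d] by linarith
    moreover have "exp d - 1 > 0" using dp by simp
    moreover have "a * (exp d - 1) > 1 * (exp d - 1)"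
      using a(2) \<open>exp d - 1 > 0\<close> by (intro mult_strict_right_mono) auto
    ultimately have "d > exp d - 1" by simp
    then show False using \<open>exp d - 1 \<ge> d\<close> by simp
  qed
  show False
  proof (cases "x1 < x2")
    case True then show ?thesis using main[OF x1 x2(1)] by blast
  next
    case False then show ?thesis using main[OF x2 x1(1)] ne by simp
  qed
qed

lemma beta_exists:
  fixes lam :: real
  assumes lam: "0 < lam" "lam < exp (-1)"
  shows "\<exists>x. lam * exp x = x \<and> x > 1"
proof -
  define X where "X = 4 / lam + 1"
  have g1s: "lam * exp 1 < 1"
  proof -
    have "lam * exp 1 < exp (-1) * exp 1" using lam by simp
    also have "\<dots> = 1" by (simp flip: exp_add)
    finally show ?thesis by simp
  qed
  hence g1: "lam * exp 1 - 1 \<le> 0" by simp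
  have gX: "0 \<le> lam * exp X - X"
  proof -
    have "(1 + X/2)^2 \<le> exp (X/2) ^ 2"
      using exp_ge_add_one_self[of "X/2"] lam by (intro power_mono) (auto simp: X_def)
    also have "\<dots> = exp X" by (simp flip: exp_of_nat_mult)
    moreover have "(1 + X/2)^2 = 1 + X + X^2/4" by (simp add: power2_eq_square field_simps)
    moreover have "X \<ge> 0" using lam by (simp add: X_def)
    ultimately have "X^2/4 \<le> exp X" by linarith
    hence "lam * (X^2/4) \<le> lam * exp X" using lam by simp
    moreover have "lam * (X^2/4) \<ge> X"
    proof -
      have "lam * X \<ge> 4" using lam by (simp add: X_def field_simps)
      hence "lam * X * X \<ge> 4 * X" using lam by (intro mult_right_mono) (auto simp: X_def)
      thus ?thesis by (simp add: power2_eq_square algebra_simps)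
    qed
    ultimately show ?thesis by simp
  qed
  have X1: "1 \<le> X" using lam by (simp add: X_def)
  have co: "continuous_on {1..X} (\<lambda>x. lam * exp x - x)" by (intro continuous_intros)
  from IVT'[of "\<lambda>x. lam * exp x - x" 1 0 X, OF g1 gX X1 co]
  obtain x where x: "1 \<le> x" "x \<le> X" "lam * exp x - x = 0"
    by auto
  have "x \<noteq> 1" using x g1s by auto
  then show ?thesis using x by (intro exI[of _ x]) auto
qed

lemma beta_props:
  fixes lam :: real
  assumes lam: "0 < lam" "lam < exp (-1)"
  shows "lam * exp (beta_fp lam) = beta_fp lam" "beta_fp lam > 1"
proof -
  obtain b where b: "lam * exp b = b" "b > 1" using beta_exists[OF lam] by blast
  have "beta_fp lam = b" unfolding beta_fp_def
  proof (rule the_equality)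
    show "lam * exp b = b \<and> \<bar>lam * exp b\<bar> > 1" using b by simp
    fix x assume "lam * exp x = x \<and> \<bar>lam * exp x\<bar> > 1"
    then have "lam * exp x = x" "x > 1" using lam by auto
    then show "x = b" using beta_unique_aux[OF lam(1) _ _ b] by blast
  qed
  then show "lam * exp (beta_fp lam) = beta_fp lam" "beta_fp lam > 1" using b by auto
qed

lemma norm_exp_quad:
  fixes z :: complex
  assumes "norm z \<le> 1 / 2"
  shows "norm (exp z - 1 - z) \<le> norm z ^ 2"
proof (cases "z = 0")
  case False
  have sums: "(\<lambda>k. z ^ (k + 2) /\<^sub>R fact (k + 2)) sums (exp z - (\<Sum>k<2. z ^ k /\<^sub>R fact k))"
    by (intro sums_split_initial_segment exp_converges)
  have "summable (\<lambda>k. norm z ^ (k + 2) /\<^sub>R fact (k + 2))"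
    using summable_norm_exp[of z]
    by (intro summable_norm summable_ignore_initial_segment)
       (auto simp: norm_power norm_divide divide_simps)
  also have "?this \<longleftrightarrow> summable (\<lambda>k. norm z ^ 2 * (norm z ^ k / fact (k +2)))"
    by (simp add: power_add mult_ac divide_simps power2_eq_square del: of_nat_Suc of_nat_add)
  also have "\<dots> \<longleftrightarrow> summable (\<lambda>k. norm z ^ k / fact (k + 2))"
    by (subst summable_cmult_iff) (use \<open>z \<noteq> 0\<close> in auto)
  finally have summable: "summable (\<lambda>k. norm z ^ k / fact (k + 2))" .
  have "exp z - 1 - z = (\<Sum>k. z ^ (k + 2) / fact (k + 2))"
    using sums by (simp add: sums_iff scaleR_conv_of_real divide_simps eval_nat_numeral)
  also have "norm \<dots> \<le> (\<Sum>k. norm (z ^ (k + 2) / fact (k + 2)))"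
    using summable_norm_exp[of z]
    by (intro summable_norm summable_ignore_initial_segment)
       (auto simp: norm_power norm_divide divide_simps)
  also have "\<dots> = (\<Sum>k. norm z ^ 2 * (norm z ^ k / fact (k + 2)))"
    by (simp add: power_add norm_power norm_divide mult_ac norm_mult power2_eq_square del: of_nat_Suc)
  also have "\<dots> = norm z ^ 2 * (\<Sum>k. norm z ^ k / fact (k + 2))"
    using summable by (rule suminf_mult)
  also have "\<dots> \<le> norm z ^ 2 * (1 / (1 - norm z) / 2)"
  proof (intro mult_left_mono, rule sums_le)
    show "(\<lambda>k. norm z ^ k / fact (k + 2)) sums (\<Sum>k. norm z ^ k / fact (k + 2))"
      using summable by blast
    show "(\<lambda>k. norm z ^ k / 2) sums (1 / (1 - norm z) / 2)"
      using assms by (intro geometric_sums sums_divide) auto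
  next
    fix k :: nat
    have "norm z ^ k / fact (k + 2) \<le> norm z ^ k / fact 2"
      by (intro divide_left_mono fact_mono) auto
    thus "norm z ^ k / fact (k + 2) \<le> norm z ^ k / 2"
      by simp
  qed (auto simp: divide_simps)
  also have "\<dots> \<le> norm z ^ 2 * 1"
  proof (intro mult_left_mono)
    have "1 - norm z \<ge> 1/2" using assms by simp
    then show "1 / (1 - norm z) / 2 \<le> 1" by (simp add: field_simps)
  qed auto
  finally show ?thesis by simp
qed auto

locale lamctx =
  fixes lam :: real
  assumes lam: "0 < lam" "lam < exp (-1)"
begin

definition "b = beta_fp lam"
abbreviation "B \<equiv> complex_of_real b"
abbreviation "Ef \<equiv> E_map lam"
definition "\<rho> = ln b / 2"
definition "q = exp \<rho> / b"
definition "r = min (\<rho> / 2) ((1 - q) / 2)"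

lemma b_fix: "lam * exp b = b" and b_gt1: "b > 1"
  using beta_props[OF lam] by (auto simp: b_def)

lemma rho_pos: "\<rho> > 0" using b_gt1 by (simp add: \<rho>_def)

lemma exp_rho: "exp \<rho> < b"
proof -
  have "ln b / 2 < ln b" using b_gt1 by simp
  then have "exp \<rho> < exp (ln b)" unfolding \<rho>_def by (rule exp_less_mono)
  also have "\<dots> = b" using b_gt1 by simp
  finally show ?thesis .
qed

lemma q_pos: "q > 0" and q_lt1: "q < 1"
proof -
  show "q > 0" using b_gt1 by (simp add: q_def)
  show "q < 1" using b_gt1 exp_rho by (simp add: q_def)
qed

lemma r_pos: "r > 0" and r_le: "r \<le> \<rho> / 2" "r \<le> (1 - q) / 2"
  using rho_pos q_lt1 by (auto simp: r_def min_def)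

lemma r_small: "r \<le> 1/2"
  using r_le(2) q_pos by simp

lemma Ef_B: "Ef B = B"
proof -
  have "Ef B = complex_of_real (lam * exp b)" by (simp add: E_map_def exp_of_real)
  then show ?thesis using b_fix by simp
qed

lemma Ef_shift: "Ef (B + u) = B * exp u"
proof -
  have "Ef (B + u) = complex_of_real (lam * exp b) * exp u"
    by (simp add: E_map_def exp_add exp_of_real)
  then show ?thesis using b_fix by simp
qed

lemma Ef_lip:
  assumes "norm (x - B) \<le> \<rho>" "norm (y - B) \<le> \<rho>"
  shows "norm (Ef x - Ef y) \<le> b * exp \<rho> * norm (x - y)"
proof (rule field_differentiable_bound[of "cball B \<rho>" Ef Ef])
  show "convex (cball B \<rho>)" by simp
  show "(Ef has_field_derivative Ef z) (at z within cball B \<rho>)" for z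
    unfolding E_map_def by (auto intro!: derivative_eq_intros)
  fix z assume "z \<in> cball B \<rho>"
  then have "norm (z - B) \<le> \<rho>" by (simp add: dist_norm norm_minus_commute)
  then have "Re z - b \<le> \<rho>" using complex_Re_le_cmod[of "z - B"] by simp
  then have "exp (Re z) \<le> exp (b + \<rho>)" by simp
  then have "lam * exp (Re z) \<le> lam * exp (b + \<rho>)" using lam by simp
  also have "\<dots> = b * exp \<rho>" using b_fix by (simp add: exp_add)
  finally show "norm (Ef z) \<le> b * exp \<rho>"
    using lam by (simp add: E_map_def norm_mult)
next
  show "x \<in> cball B \<rho>" "y \<in> cball B \<rho>" using assms by (auto simp: dist_norm norm_minus_commute)
qed

end

context lamctx begin

primrec Ls :: "nat \<Rightarrow> complex \<Rightarrow> complex" where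
  "Ls 0 z = B + z"
| "Ls (Suc n) z = Ef (Ls n (z / B))"

definition "D n z = Ls (Suc n) z - Ls n z"

lemma B_ne0: "B \<noteq> 0" using b_gt1 by simp
lemma norm_B: "norm B = b" using b_gt1 by simp

lemma div_b: assumes "0 \<le> a" shows "a / b \<le> a"
proof -
  have "a * 1 \<le> a * b" using assms b_gt1 by (intro mult_left_mono) auto
  then show ?thesis using b_gt1 by (simp add: divide_le_eq)
qed

lemma D0: assumes "norm z \<le> r" shows "norm (D 0 z) \<le> norm z ^ 2"
proof -
  define u where "u = z / B"
  have zu: "z = B * u" using B_ne0 by (simp add: u_def)
  have nu: "norm u = norm z / b" using b_gt1 by (simp add: u_def norm_divide)
  have "norm u \<le> 1/2" using assms r_small div_b[OF norm_ge_zero[of z]] nu by linarith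
  have "D 0 z = B * (exp u - 1 - u)" by (simp add: D_def u_def[symmetric] Ef_shift zu algebra_simps)
  then have "norm (D 0 z) = b * norm (exp u - 1 - u)" using b_gt1 by (simp add: norm_mult norm_B)
  also have "\<dots> \<le> b * norm u ^ 2" using norm_exp_quad[OF \<open>norm u \<le> 1/2\<close>] b_gt1 by simp
  also have "\<dots> = norm z ^ 2 / b" using b_gt1 by (simp add: nu power2_eq_square)
  also have "\<dots> \<le> norm z ^ 2" by (rule div_b) simp
  finally show ?thesis .
qed

lemma near:
  assumes IH: "\<And>k z. k < m \<Longrightarrow> norm z \<le> r \<Longrightarrow> norm (D k z) \<le> q^k * norm z ^ 2"
    and z: "norm z \<le> r"
  shows "norm (Ls m z - B - z) \<le> norm z ^ 2 / (1 - q)" "norm (Ls m z - B) \<le> \<rho>"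
proof -
  have "Ls m z - B - z = (\<Sum>k<m. D k z)"
    unfolding D_def by (subst sum_lessThan_telescope[of "\<lambda>k. Ls k z"]) simp
  also have "norm \<dots> \<le> (\<Sum>k<m. q^k * norm z ^ 2)"
    by (intro sum_norm_le IH z) simp
  also have "\<dots> = norm z ^ 2 * (\<Sum>k<m. q^k)" by (simp add: sum_distrib_right mult.commute)
  also have "\<dots> \<le> norm z ^ 2 * (1 / (1 - q))"
  proof (intro mult_left_mono)
    have "(\<Sum>k<m. q^k) = (1 - q^m) / (1 - q)" using q_lt1 by (simp add: sum_gp_strict)
    also have "\<dots> \<le> 1 / (1 - q)" using q_lt1 q_pos by (intro divide_right_mono) auto
    finally show "(\<Sum>k<m. q^k) \<le> 1 / (1 - q)" .
  qed simp
  finally show A: "norm (Ls m z - B - z) \<le> norm z ^ 2 / (1 - q)" by simp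
  have "norm z ^ 2 / (1 - q) \<le> r * r / (1 - q)"
  proof (intro divide_right_mono)
    show "norm z ^ 2 \<le> r * r" using z unfolding power2_eq_square by (intro mult_mono) (use r_pos in auto)
  qed (use q_lt1 in auto)
  also have "\<dots> \<le> r * ((1 - q) / 2) / (1 - q)"
    using r_le r_pos q_lt1 by (intro divide_right_mono mult_left_mono) auto
  also have "\<dots> = r / 2" using q_lt1 by (simp add: field_simps)
  finally have "norm (Ls m z - B - z) \<le> r / 2" using A by linarith
  then have "norm (Ls m z - B) \<le> norm z + r / 2" using norm_triangle_ineq[of "Ls m z - B - z" z] by simp
  also have "\<dots> \<le> \<rho>" using z r_le rho_pos r_pos by linarith
  finally show "norm (Ls m z - B) \<le> \<rho>" .
qed

lemma Dbound: "norm z \<le> r \<Longrightarrow> norm (D n z) \<le> q^n * norm z ^ 2"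
proof (induction n arbitrary: z rule: less_induct)
  case (less n)
  show ?case
  proof (cases n)
    case 0 then show ?thesis using D0[OF less.prems] by simp
  next
    case (Suc m)
    define w where "w = z / B"
    have nw: "norm w = norm z / b" using b_gt1 by (simp add: w_def norm_divide)
    have wr: "norm w \<le> r" using less.prems div_b[OF norm_ge_zero[of z]] nw by linarith
    have IH: "\<And>k z. k < n \<Longrightarrow> norm z \<le> r \<Longrightarrow> norm (D k z) \<le> q^k * norm z ^ 2"
      using less.IH by blast
    have IH': "\<And>k z. k < Suc m \<Longrightarrow> norm z \<le> r \<Longrightarrow> norm (D k z) \<le> q^k * norm z ^ 2"
      using IH Suc by blast
    have n1: "norm (Ls (Suc m) w - B) \<le> \<rho>" by (rule near(2)[OF IH' wr])
    have n2: "norm (Ls m w - B) \<le> \<rho>" by (rule near(2)[of m, OF IH' wr]) simp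
    have "D n z = Ef (Ls (Suc m) w) - Ef (Ls m w)" by (simp add: D_def Suc w_def)
    also have "norm \<dots> \<le> b * exp \<rho> * norm (Ls (Suc m) w - Ls m w)" by (rule Ef_lip[OF n1 n2])
    also have "\<dots> = b * exp \<rho> * norm (D m w)" by (simp add: D_def)
    also have "\<dots> \<le> b * exp \<rho> * (q^m * norm w ^ 2)"
      using IH[of m w] Suc wr b_gt1 by (intro mult_left_mono) auto
    also have "\<dots> = q^n * norm z ^ 2"
      using b_gt1 by (simp add: Suc nw q_def power2_eq_square field_simps)
    finally show ?thesis .
  qed
qed

lemma near_all: "norm z \<le> r \<Longrightarrow> norm (Ls m z - B - z) \<le> norm z ^ 2 / (1 - q)"
  "norm z \<le> r \<Longrightarrow> norm (Ls m z - B) \<le> \<rho>"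
  using near[OF Dbound] by blast+

end

context lamctx begin

lemma Ef_holo: "Ef holomorphic_on S"
  unfolding E_map_def by (intro holomorphic_intros)

lemma Ls_holo: "Ls n holomorphic_on S"
proof (induction n arbitrary: S)
  case 0 then show ?case by (simp add: holomorphic_intros)
next
  case (Suc n)
  have "(Ef \<circ> (Ls n \<circ> (\<lambda>z. z / B))) holomorphic_on S"
    by (intro holomorphic_on_compose_gen[OF _ Ef_holo subset_UNIV] holomorphic_on_compose_gen[OF _ Suc.IH subset_UNIV]
        holomorphic_intros) (use B_ne0 in auto)
  then show ?case by (simp add: o_def)
qed

lemma D_holo: "D n holomorphic_on S"
  unfolding D_def[abs_def] by (intro holomorphic_intros Ls_holo)

lemma Ls_sum: "Ls n z = B + z + (\<Sum>i<n. D i z)"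
  unfolding D_def by (subst sum_lessThan_telescope[of "\<lambda>k. Ls k z"]) simp

lemma unif: "uniform_limit (cball 0 r) (\<lambda>n z. \<Sum>i<n. D i z) (\<lambda>z. \<Sum>i. D i z) sequentially"
proof (rule Weierstrass_m_test)
  fix n z assume "z \<in> cball (0::complex) r"
  then have z: "norm z \<le> r" by simp
  have "norm (D n z) \<le> q^n * norm z ^ 2" by (rule Dbound[OF z])
  also have "\<dots> \<le> q^n * r^2" using z q_pos by (intro mult_left_mono power_mono) auto
  finally show "norm (D n z) \<le> q^n * r^2" .
next
  show "summable (\<lambda>n. q^n * r^2)" using q_pos q_lt1 by (intro summable_mult2 summable_geometric) auto
qed

definition "Lst z = B + z + (\<Sum>i. D i z)"

lemma Lst_holo: "Lst holomorphic_on ball 0 r"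
proof -
  obtain "(\<lambda>z. \<Sum>i. D i z) holomorphic_on ball 0 r"
  proof (rule holomorphic_uniform_limit[OF _ unif])
    show "\<forall>\<^sub>F n in sequentially. continuous_on (cball 0 r) (\<lambda>z. \<Sum>i<n. D i z) \<and>
        (\<lambda>z. \<Sum>i<n. D i z) holomorphic_on ball 0 r"
      by (intro always_eventually allI conjI holomorphic_on_imp_continuous_on holomorphic_intros D_holo)
  qed auto
  then show ?thesis unfolding Lst_def[abs_def] by (intro holomorphic_intros)
qed

lemma Ls_tendsto_Lst: "norm z \<le> r \<Longrightarrow> (\<lambda>n. Ls n z) \<longlonglongrightarrow> Lst z"
proof -
  assume z: "norm z \<le> r"
  have "(\<lambda>n. \<Sum>i<n. D i z) \<longlonglongrightarrow> (\<Sum>i. D i z)"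
    using tendsto_uniform_limitI[OF unif, of z] z by simp
  then have "(\<lambda>n. B + z + (\<Sum>i<n. D i z)) \<longlonglongrightarrow> B + z + (\<Sum>i. D i z)"
    by (intro tendsto_intros)
  then show ?thesis by (simp add: Ls_sum Lst_def)
qed

lemma Ef_pow_holo: "(Ef ^^ m) holomorphic_on S"
proof (induction m arbitrary: S)
  case 0 then show ?case by (simp add: holomorphic_intros)
next
  case (Suc m)
  have "(Ef \<circ> (Ef ^^ m)) holomorphic_on S"
    by (intro holomorphic_on_compose_gen[OF Suc.IH Ef_holo subset_UNIV])
  then show ?case by (metis funpow.simps(2))
qed

lemma Ef_pow_cont: "isCont (Ef ^^ m) z"
  using holomorphic_on_imp_continuous_on[OF Ef_pow_holo[of m UNIV]] continuous_on_eq_continuous_at[OF open_UNIV]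
  by blast

lemma Ls_shift: "Ls (n + m) z = (Ef ^^ m) (Ls n (z / B ^ m))"
proof (induction m arbitrary: z)
  case 0 then show ?case by simp
next
  case (Suc m)
  have "Ls (n + Suc m) z = Ef (Ls (n + m) (z / B))" by simp
  also have "\<dots> = Ef ((Ef ^^ m) (Ls n (z / B / B ^ m)))" by (simp add: Suc.IH)
  also have "z / B / B ^ m = z / B ^ Suc m" by (simp add: field_simps)
  finally show ?case by simp
qed

lemma exists_scale: "\<exists>m. norm z / b ^ m < r"
proof -
  obtain m where "norm z / r < b ^ m" using real_arch_pow[OF b_gt1] by blast
  then show ?thesis using r_pos b_gt1 by (intro exI[of _ m]) (simp add: field_simps)
qed

lemma norm_div_Bpow: "norm (z / B ^ m) = norm z / b ^ m"
  using b_gt1 by (simp add: norm_divide norm_power)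

lemma Ls_conv: "convergent (\<lambda>n. Ls n z)"
proof -
  obtain m where m: "norm z / b ^ m < r" using exists_scale by blast
  have "(\<lambda>n. Ls n (z / B ^ m)) \<longlonglongrightarrow> Lst (z / B ^ m)"
    using m by (intro Ls_tendsto_Lst) (simp add: norm_div_Bpow)
  then have "(\<lambda>n. (Ef ^^ m) (Ls n (z / B ^ m))) \<longlonglongrightarrow> (Ef ^^ m) (Lst (z / B ^ m))"
    using Ef_pow_cont isCont_tendsto_compose by blast
  then have "(\<lambda>n. Ls (n + m) z) \<longlonglongrightarrow> (Ef ^^ m) (Lst (z / B ^ m))"
    by (simp add: Ls_shift)
  then have "(\<lambda>n. Ls n z) \<longlonglongrightarrow> (Ef ^^ m) (Lst (z / B ^ m))" by (rule LIMSEQ_offset)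
  then show ?thesis by (auto simp: convergent_def)
qed

definition "Lg z = lim (\<lambda>n. Ls n z)"

lemma Lg_tendsto: "(\<lambda>n. Ls n z) \<longlonglongrightarrow> Lg z"
  unfolding Lg_def using Ls_conv convergent_LIMSEQ_iff by blast

lemma Lg_Lst: "norm z \<le> r \<Longrightarrow> Lg z = Lst z"
  using Lg_tendsto Ls_tendsto_Lst LIMSEQ_unique by blast

lemma Lg_fun: "Ef (Lg z) = Lg (B * z)"
proof -
  have "(\<lambda>n. Ef (Ls n z)) \<longlonglongrightarrow> Ef (Lg z)"
    unfolding E_map_def by (intro tendsto_intros Lg_tendsto)
  moreover have "(\<lambda>n. Ef (Ls n z)) = (\<lambda>n. Ls (Suc n) (B * z))" using B_ne0 by simp
  moreover have "(\<lambda>n. Ls (Suc n) (B * z)) \<longlonglongrightarrow> Lg (B * z)"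
    using Lg_tendsto by (rule LIMSEQ_Suc)
  ultimately show ?thesis using LIMSEQ_unique by metis
qed

lemma Lg_iter: "Lg z = (Ef ^^ m) (Lg (z / B ^ m))"
proof (induction m arbitrary: z)
  case 0 then show ?case by simp
next
  case (Suc m)
  have "Lg (z / B ^ m) = Ef (Lg (z / B ^ Suc m))"
    using Lg_fun[of "z / B ^ Suc m"] B_ne0 by (simp add: field_simps)
  then show ?case using Suc.IH[of z] by (simp add: funpow_swap1)
qed

lemma Lg_holo: "Lg holomorphic_on S"
proof (rule holomorphic_on_balls_imp_entire'[of Lg 0])
  fix R :: real assume "R > 0"
  obtain m where m: "R / b ^ m < r" using exists_scale[of "complex_of_real R"] \<open>R > 0\<close> by auto
  have h1: "Lg holomorphic_on ball 0 r"
    by (rule holomorphic_transform[OF Lst_holo]) (simp add: Lg_Lst)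
  have "((Ef ^^ m) \<circ> (Lg \<circ> (\<lambda>z. z / B ^ m))) holomorphic_on ball 0 R"
  proof (intro holomorphic_on_compose_gen[OF _ Ef_pow_holo subset_UNIV] holomorphic_on_compose_gen[OF _ h1])
    show "(\<lambda>z. z / B ^ m) holomorphic_on ball 0 R" by (intro holomorphic_intros) (use B_ne0 in auto)
    show "(\<lambda>z. z / B ^ m) ` ball 0 R \<subseteq> ball 0 r"
    proof
      fix w assume "w \<in> (\<lambda>z. z / B ^ m) ` ball 0 R"
      then obtain z where z: "norm z < R" "w = z / B ^ m" by auto
      have "norm w = norm z / b ^ m" using z by (simp add: norm_div_Bpow)
      also have "\<dots> < R / b ^ m" using z b_gt1 by (simp add: divide_strict_right_mono)
      finally show "w \<in> ball 0 r" using m by simp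
    qed
  qed
  then show "Lg holomorphic_on ball 0 R"
    by (rule holomorphic_transform) (simp add: Lg_iter[symmetric])
qed

lemma Ls_0: "Ls n 0 = B"
  by (induction n) (simp_all add: Ef_B)

lemma Lg_0: "Lg 0 = B"
  using Lg_tendsto[of 0] by (simp add: Ls_0 LIMSEQ_const_iff)

lemma Lg_near: "norm z \<le> r \<Longrightarrow> norm (Lg z - B - z) \<le> norm z ^ 2 / (1 - q)"
proof -
  assume z: "norm z \<le> r"
  have "(\<lambda>n. norm (Ls n z - B - z)) \<longlonglongrightarrow> norm (Lg z - B - z)"
    by (intro tendsto_intros Lg_tendsto)
  then show ?thesis
    by (rule LIMSEQ_le_const2) (use near_all(1)[OF z] in auto)
qed

end

context lamctx begin

lemma Lg_deriv0: "(Lg has_field_derivative 1) (at 0)"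
proof -
  have "((\<lambda>y. (Lg y - Lg 0) / (y - 0) - 1) \<longlongrightarrow> 0) (at 0)"
  proof (rule tendsto_0_le[where f="\<lambda>y. y" and K="1 / (1 - q)"])
    show "((\<lambda>y. y) \<longlongrightarrow> (0::complex)) (at 0)" by (rule tendsto_ident_at)
    show "\<forall>\<^sub>F y in at 0. norm ((Lg y - Lg 0) / (y - 0) - 1) \<le> norm y * (1 / (1 - q))"
      unfolding eventually_at
    proof (intro exI[of _ r] conjI ballI impI)
      show "r > 0" by (rule r_pos)
      fix y :: complex assume "y \<in> UNIV" and y: "y \<noteq> 0 \<and> dist y 0 < r"
      then have yr: "norm y \<le> r" by simp
      have "(Lg y - Lg 0) / (y - 0) - 1 = (Lg y - B - y) / y" using y by (simp add: Lg_0 field_simps)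
      then have "norm ((Lg y - Lg 0) / (y - 0) - 1) = norm (Lg y - B - y) / norm y"
        by (simp add: norm_divide)
      also have "\<dots> \<le> (norm y ^ 2 / (1 - q)) / norm y"
        using Lg_near[OF yr] by (intro divide_right_mono) auto
      also have "\<dots> = norm y * (1 / (1 - q))" using y by (simp add: power2_eq_square)
      finally show "norm ((Lg y - Lg 0) / (y - 0) - 1) \<le> norm y * (1 / (1 - q))" .
    qed
  qed
  then show ?thesis by (simp add: has_field_derivative_iff Lim_null[symmetric])
qed

lemma deriv_Lg0: "deriv Lg 0 = 1"
  using Lg_deriv0 by (rule DERIV_imp_deriv)

lemma exp_quot_tendsto: "((\<lambda>w::complex. (exp w - 1) / w) \<longlongrightarrow> 1) (at 0)"
proof -
  have "(exp has_field_derivative exp 0) (at (0::complex))" by (rule DERIV_exp)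
  then show ?thesis by (simp add: has_field_derivative_iff)
qed

lemma Lg_unique:
  assumes holM: "M holomorphic_on UNIV" and M0: "M 0 = B" and dM: "deriv M 0 = 1"
    and funM: "\<And>z. Ef (M z) = M (B * z)"
  shows "M = Lg"
proof -
  define DD where "DD z = M z - Lg z" for z
  have holD: "DD holomorphic_on UNIV" unfolding DD_def[abs_def] using holM Lg_holo by (intro holomorphic_intros)
  have D0: "DD 0 = 0" by (simp add: DD_def M0 Lg_0)
  have Mdiff: "M field_differentiable at z" for z using holM holomorphic_on_imp_differentiable_at by blast
  have dM': "(M has_field_derivative 1) (at 0)"
    using Mdiff[of 0] dM DERIV_deriv_iff_field_differentiable by metis
  have dD: "(DD has_field_derivative 0) (at 0)"
    using dM' Lg_deriv0 unfolding DD_def[abs_def] by (auto intro!: derivative_eq_intros)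
  have "DD z = 0" for z
  proof (cases "DD constant_on UNIV")
    case True
    then obtain c where "\<And>z. DD z = c" by (auto simp: constant_on_def)
    then show ?thesis using D0 by metis
  next
    case False
    obtain g \<rho>' n where n: "0 < n" and rp: "0 < \<rho>'" and gh: "g holomorphic_on ball 0 \<rho>'"
      and fac: "\<And>w. w \<in> ball 0 \<rho>' \<Longrightarrow> DD w = (w - 0)^n * g w"
      and gnz: "\<And>w. w \<in> ball 0 \<rho>' \<Longrightarrow> g w \<noteq> 0"
      by (rule holomorphic_factor_zero_nonconstant[OF holD open_UNIV connected_UNIV UNIV_I D0 False]) blast
    have gcont: "isCont g w" if "w \<in> ball 0 \<rho>'" for w
      using holomorphic_on_imp_continuous_on[OF gh] continuous_on_eq_continuous_at[OF open_ball] that by blast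
    have gdiff: "g field_differentiable at 0"
      using holomorphic_on_imp_differentiable_at[OF gh open_ball] rp by simp
    have g0: "g 0 \<noteq> 0" using gnz rp by simp
    show ?thesis
    proof (cases "n = 1")
      case True
      have "((\<lambda>w. (w - 0)^n * g w) has_field_derivative g 0) (at 0)"
        using gdiff True unfolding field_differentiable_def
        by (auto intro!: derivative_eq_intros)
      then have "(DD has_field_derivative g 0) (at 0)"
        by (rule has_field_derivative_transform_within_open[OF _ open_ball[of 0 \<rho>']]) (use rp fac in auto)
      then have "g 0 = 0" using dD DERIV_unique by blast
      then show ?thesis using g0 by simp
    next
      case False
      with n have n2: "n \<ge> 2" by simp
      define u where "u z = z ^ n * g z" for z
      have ev: "\<forall>\<^sub>F z in at 0. B ^ n * g (B * z) = lam * exp (Lg z) * ((exp (u z) - 1) / u z) * g z"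
        unfolding eventually_at
      proof (intro exI[of _ "\<rho>' / b"] conjI ballI impI)
        show "\<rho>' / b > 0" using rp b_gt1 by simp
        fix z :: complex assume "z \<in> UNIV" and z: "z \<noteq> 0 \<and> dist z 0 < \<rho>' / b"
        have zb: "z \<in> ball 0 \<rho>'" using z b_gt1 div_b[of \<rho>'] rp by auto
        have Bzb: "B * z \<in> ball 0 \<rho>'" using z b_gt1 by (simp add: norm_mult field_simps)
        have unz: "u z \<noteq> 0" using z gnz[OF zb] by (simp add: u_def)
        have "DD (B * z) = Ef (M z) - Ef (Lg z)" by (simp add: DD_def funM Lg_fun)
        also have "\<dots> = lam * exp (Lg z) * (exp (DD z) - 1)"
          by (simp add: E_map_def DD_def exp_diff field_simps)
        finally have eq: "(B * z) ^ n * g (B * z) = lam * exp (Lg z) * (exp (u z) - 1)"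
          using fac[OF Bzb] fac[OF zb] by (simp add: u_def)
        have gz: "g z \<noteq> 0" using gnz[OF zb] .
        have zn: "z ^ n \<noteq> 0" using z by simp
        have "lam * exp (Lg z) * ((exp (u z) - 1) / u z) * g z = lam * exp (Lg z) * (exp (u z) - 1) / z ^ n"
          using gz zn z by (simp add: u_def field_simps)
        also have "\<dots> = (B * z) ^ n * g (B * z) / z ^ n" using eq by simp
        also have "\<dots> = B ^ n * g (B * z)" using zn z by (simp add: power_mult_distrib)
        finally show "B ^ n * g (B * z) = lam * exp (Lg z) * ((exp (u z) - 1) / u z) * g z" by simp
      qed
      have l1: "((\<lambda>z. B ^ n * g (B * z)) \<longlongrightarrow> B ^ n * g 0) (at 0)"
      proof -
        have g0c: "isCont g (B * 0)" using gcont[of 0] rp by simp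
        have "isCont (\<lambda>z. g (B * z)) 0"
          using isCont_o2[where f="\<lambda>z. B * z" and a=0 and g=g, OF _ g0c] by (simp add: continuous_intros)
        then show ?thesis by (intro tendsto_intros) (simp add: isCont_def)
      qed
      have ulim: "filterlim u (at 0) (at 0)"
      proof (rule filterlim_atI)
        have "isCont u 0" unfolding u_def[abs_def] using gcont[of 0] rp by (intro continuous_intros) auto
        then show "(u \<longlongrightarrow> 0) (at 0)" using n by (simp add: isCont_def u_def power_0_left)
        show "\<forall>\<^sub>F z in at 0. u z \<noteq> 0"
          unfolding eventually_at
          by (intro exI[of _ \<rho>'] conjI ballI impI rp) (use gnz in \<open>auto simp: u_def\<close>)
      qed
      have l2: "((\<lambda>z. lam * exp (Lg z) * ((exp (u z) - 1) / u z) * g z) \<longlongrightarrow> lam * exp B * 1 * g 0) (at 0)"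
      proof (intro tendsto_intros)
        have "isCont Lg 0" using holomorphic_on_imp_continuous_on[OF Lg_holo[of UNIV]]
          continuous_on_eq_continuous_at[OF open_UNIV] by blast
        then show "(Lg \<longlongrightarrow> B) (at 0)" by (simp add: isCont_def Lg_0)
        show "((\<lambda>z. (exp (u z) - 1) / u z) \<longlongrightarrow> 1) (at 0)"
          using filterlim_compose[OF exp_quot_tendsto ulim] .
        show "(g \<longlongrightarrow> g 0) (at 0)" using gcont[of 0] rp by (simp add: isCont_def)
      qed
      have "lam * exp B = B" using Ef_B by (simp add: E_map_def)
      then have l2': "((\<lambda>z. lam * exp (Lg z) * ((exp (u z) - 1) / u z) * g z) \<longlongrightarrow> B * g 0) (at 0)"
        using l2 by simp
      have ev': "\<forall>\<^sub>F z in at 0. lam * exp (Lg z) * ((exp (u z) - 1) / u z) * g z = B ^ n * g (B * z)"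
        by (rule eventually_mono[OF ev]) simp
      have l3: "((\<lambda>z. B ^ n * g (B * z)) \<longlongrightarrow> B * g 0) (at 0)"
        by (rule Lim_transform_eventually[OF l2' ev'])
      have "B ^ n * g 0 = B * g 0"
        by (rule tendsto_unique[OF at_neq_bot l1 l3])
      then have "B ^ n = B" using g0 by simp
      then have "complex_of_real (b ^ n) = complex_of_real b" by simp
      then have "b ^ n = b" by (simp only: of_real_eq_iff)
      moreover have "b ^ n > b"
      proof -
        have "b ^ n = b * b ^ (n - 1)" using n by (cases n) auto
        moreover have "b ^ (n - 1) > 1" using b_gt1 n2 by (intro one_less_power) auto
        ultimately show ?thesis using b_gt1 by simp
      qed
      ultimately show ?thesis by simp
    qed
  qed
  then show ?thesis by (auto simp: DD_def)
qed

lemma L_lin_eq: "L_lin lam = Lg"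
  unfolding L_lin_def
proof (rule the_equality)
  show "Lg holomorphic_on UNIV \<and> Lg 0 = complex_of_real (beta_fp lam) \<and> deriv Lg 0 = 1 \<and>
    (\<forall>z. E_map lam (Lg z) = Lg (complex_of_real (beta_fp lam) * z))"
    using Lg_holo Lg_0 deriv_Lg0 Lg_fun by (simp add: b_def)
  fix M assume "M holomorphic_on UNIV \<and> M 0 = complex_of_real (beta_fp lam) \<and> deriv M 0 = 1 \<and>
    (\<forall>z. E_map lam (M z) = M (complex_of_real (beta_fp lam) * z))"
  then show "M = Lg" using Lg_unique by (simp add: b_def)
qed

end

context lamctx begin

lemma Ls_real: "\<exists>y. Ls n (complex_of_real x) = complex_of_real y"
proof (induction n arbitrary: x)
  case 0 then show ?case by (intro exI[of _ "b + x"]) simp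
next
  case (Suc n)
  obtain y where y: "Ls n (complex_of_real (x / b)) = complex_of_real y" using Suc.IH by blast
  have "Ls (Suc n) (complex_of_real x) = Ef (complex_of_real y)"
    using y by (simp add: of_real_divide[symmetric] del: of_real_divide)
  also have "\<dots> = complex_of_real (lam * exp y)" by (simp add: E_map_def exp_of_real)
  finally show ?case by blast
qed

lemma Lg_real: "Lg (complex_of_real x) \<in> \<real>"
proof (rule Lim_in_closed_set[OF closed_complex_Reals _ _ Lg_tendsto])
  show "\<forall>\<^sub>F n in sequentially. Ls n (complex_of_real x) \<in> \<real>"
    using Ls_real[of _ x] by (auto intro!: always_eventually simp: Reals_def)
qed simp

definition "ell x = Re (Lg (complex_of_real x))"

lemma Lg_ell: "Lg (complex_of_real x) = complex_of_real (ell x)"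
  using Lg_real[of x] unfolding ell_def by (metis Reals_cases Re_complex_of_real)

lemma ell_0: "ell 0 = b" by (simp add: ell_def Lg_0)

lemma ell_fun: "ell (b * x) = lam * exp (ell x)"
proof -
  have "complex_of_real (ell (b * x)) = Lg (B * complex_of_real x)" by (simp add: Lg_ell[symmetric])
  also have "\<dots> = Ef (Lg (complex_of_real x))" by (simp add: Lg_fun)
  also have "\<dots> = complex_of_real (lam * exp (ell x))" by (simp add: Lg_ell E_map_def exp_of_real)
  finally show ?thesis by (simp only: of_real_eq_iff)
qed

lemma ell_pos: "ell x > 0"
proof -
  have "ell x = ell (b * (x / b))" using b_gt1 by simp
  also have "\<dots> = lam * exp (ell (x / b))" by (rule ell_fun)
  finally show ?thesis using lam by simp
qed

definition "ell' x = Re (deriv Lg (complex_of_real x))"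

lemma ell_deriv: "(ell has_real_derivative ell' x) (at x)"
proof -
  have "Lg field_differentiable at (complex_of_real x)"
    using Lg_holo holomorphic_on_imp_differentiable_at by blast
  then have "(Lg has_field_derivative deriv Lg (complex_of_real x)) (at (complex_of_real x))"
    using DERIV_deriv_iff_field_differentiable by blast
  from has_field_derivative_Re[OF has_vector_derivative_real_field[OF this]]
  show ?thesis unfolding ell_def[abs_def] ell'_def by simp
qed

lemma ell'_cont: "isCont ell' x"
proof -
  have "deriv Lg holomorphic_on UNIV" by (intro holomorphic_deriv Lg_holo) simp
  then have "isCont (deriv Lg) (complex_of_real x)"
    using holomorphic_on_imp_continuous_on continuous_on_eq_continuous_at[OF open_UNIV] by blast
  then have "isCont (\<lambda>x. deriv Lg (complex_of_real x)) x"
    using isCont_o2[where f=complex_of_real and a=x and g="deriv Lg"] by (simp add: continuous_intros)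
  then have "continuous (at x) (\<lambda>x. Re (deriv Lg (complex_of_real x))) \<and>
      continuous (at x) (\<lambda>x. Im (deriv Lg (complex_of_real x)))"
    by (rule iffD1[OF continuous_complex_iff])
  then show ?thesis unfolding ell'_def[abs_def] by blast
qed

lemma ell_cont: "isCont ell x"
  using ell_deriv DERIV_isCont by blast

lemma ell'_0: "ell' 0 = 1" by (simp add: ell'_def deriv_Lg0)

lemma ell'_rel: "b * ell' (b * x) = ell (b * x) * ell' x"
proof -
  have d1: "((\<lambda>x. ell (b * x)) has_real_derivative ell' (b * x) * b) (at x)"
    using DERIV_chain2[OF ell_deriv, of "\<lambda>x. b * x" b x] by (auto intro!: derivative_eq_intros)
  have d2: "((\<lambda>x. lam * exp (ell x)) has_real_derivative lam * (exp (ell x) * ell' x)) (at x)"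
    by (auto intro!: derivative_eq_intros ell_deriv)
  have "(\<lambda>x. ell (b * x)) = (\<lambda>x. lam * exp (ell x))" by (simp add: ell_fun)
  then have eq: "ell' (b * x) * b = lam * (exp (ell x) * ell' x)" using d1 d2 DERIV_unique by metis
  have "b * ell' (b * x) = ell' (b * x) * b" by (simp only: mult.commute)
  also have "\<dots> = lam * (exp (ell x) * ell' x)" by (rule eq)
  also have "\<dots> = ell (b * x) * ell' x" by (simp only: ell_fun mult.assoc)
  finally show ?thesis .
qed

lemma ell'_nonzero: "ell' x \<noteq> 0"
proof
  assume x0: "ell' x = 0"
  have z: "ell' (x / b ^ n) = 0" for n
  proof (induction n)
    case 0 then show ?case using x0 by simp
  next
    case (Suc n)
    have "b * ell' (b * (x / b ^ Suc n)) = ell (b * (x / b ^ Suc n)) * ell' (x / b ^ Suc n)"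
      by (rule ell'_rel)
    moreover have "b * (x / b ^ Suc n) = x / b ^ n" using b_gt1 by (simp add: field_simps)
    ultimately have "ell (x / b ^ n) * ell' (x / b ^ Suc n) = 0" using Suc.IH by simp
    then show ?case using ell_pos[of "x / b ^ n"] by simp
  qed
  have "(\<lambda>n. x * (1 / b) ^ n) \<longlonglongrightarrow> x * 0"
    using b_gt1 by (intro tendsto_intros) auto
  then have "(\<lambda>n. x / b ^ n) \<longlonglongrightarrow> 0" by (simp add: power_one_over)
  then have "(\<lambda>n. ell' (x / b ^ n)) \<longlonglongrightarrow> ell' 0"
    using ell'_cont isCont_tendsto_compose by blast
  then have "ell' 0 = 0" using z by (simp add: LIMSEQ_const_iff)
  then show False using ell'_0 by simp
qed

lemma ell'_pos: "ell' x > 0"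
proof (rule ccontr)
  assume "\<not> ell' x > 0"
  then have n: "ell' x \<le> 0" by simp
  have co: "continuous_on S ell'" for S using ell'_cont by (simp add: continuous_at_imp_continuous_on)
  have "\<exists>z. ell' z = 0"
  proof (cases "x \<ge> 0")
    case True
    from IVT2'[of ell' x 0 0, OF n _ True co] show ?thesis using ell'_0 by auto
  next
    case False
    from IVT'[of ell' x 0 0, OF n _ _ co] show ?thesis using ell'_0 False by auto
  qed
  then show False using ell'_nonzero by blast
qed

lemma ell_strict: "x < y \<Longrightarrow> ell x < ell y"
  by (rule DERIV_pos_imp_increasing[where f=ell]) (use ell_deriv ell'_pos in blast)+

lemma ell_unbounded: "\<exists>s. ell s \<ge> t"
proof -
  define y0 where "y0 = ell 1"
  define d where "d = lam * exp y0 - y0"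
  have y0b: "y0 > b" using ell_strict[of 0 1] ell_0 by (simp add: y0_def)
  have dp: "d > 0"
  proof -
    have "d = ell (b * 1) - ell 1" unfolding d_def y0_def ell_fun by simp
    then show ?thesis using ell_strict[of 1 b] b_gt1 by simp
  qed
  have grow: "lam * exp y - y \<ge> d" if "y \<ge> y0" for y
  proof -
    have "exp y = exp y0 * exp (y - y0)" by (simp flip: exp_add)
    moreover have "exp (y - y0) \<ge> 1 + (y - y0)" by (rule exp_ge_add_one_self)
    moreover have "lam * exp y0 \<ge> 1"
    proof -
      have "lam * exp y0 \<ge> lam * exp b" using y0b lam by simp
      then show ?thesis using b_fix b_gt1 by simp
    qed
    ultimately have "lam * exp y \<ge> lam * exp y0 * (1 + (y - y0))"
      using lam by (simp add: mult.assoc)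
    also have "lam * exp y0 * (1 + (y - y0)) \<ge> lam * exp y0 + (y - y0)"
    proof -
      have h: "0 \<le> (lam * exp y0 - 1) * (y - y0)"
        using \<open>lam * exp y0 \<ge> 1\<close> that by (intro mult_nonneg_nonneg) auto
      have "lam * exp y0 * (1 + (y - y0)) = lam * exp y0 + (y - y0) + (lam * exp y0 - 1) * (y - y0)"
        by (simp add: algebra_simps)
      then show ?thesis using h by linarith
    qed
    finally show ?thesis unfolding d_def by simp
  qed
  have P: "ell (b ^ n) \<ge> y0 + real n * d" for n
  proof (induction n)
    case 0 then show ?case by (simp add: y0_def)
  next
    case (Suc n)
    have "real n * d \<ge> 0" using dp by simp
    then have ge: "ell (b ^ n) \<ge> y0" using Suc.IH by linarith
    have "ell (b ^ Suc n) = lam * exp (ell (b ^ n))" by (simp add: ell_fun)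
    also have "\<dots> \<ge> ell (b ^ n) + d" using grow[OF ge] by simp
    finally show ?case using Suc.IH by (simp add: algebra_simps)
  qed
  obtain n where "(t - y0) / d < real n" using reals_Archimedean2 by blast
  then have "t \<le> y0 + real n * d" using dp by (simp add: field_simps)
  then show ?thesis using P[of n] by (intro exI[of _ "b ^ n"]) simp
qed

lemma Phi_eq: assumes "t > b" shows "\<exists>s. s > 0 \<and> ell s = t \<and> Phi_inv lam t = s"
proof -
  obtain S where S: "ell S \<ge> t" using ell_unbounded by blast
  have S0: "S \<ge> 0"
  proof (rule ccontr)
    assume "\<not> S \<ge> 0"
    then have "ell S < ell 0" using ell_strict by simp
    then show False using S assms ell_0 by simp
  qed
  have co: "continuous_on {0..S} ell" using ell_cont by (simp add: continuous_at_imp_continuous_on)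
  from IVT'[of ell 0 t S, OF _ S S0 co] assms ell_0
  obtain s where s: "0 \<le> s" "ell s = t" by auto
  have "s \<noteq> 0" using s assms ell_0 by auto
  have inj: "ell s' = t \<Longrightarrow> s' = s" for s'
    using ell_strict[of s s'] ell_strict[of s' s] s by (cases "s < s'"; cases "s' < s") auto
  have "Phi_inv lam t = s" unfolding Phi_inv_def L_lin_eq
  proof (rule the_equality)
    show "Lg (complex_of_real s) = complex_of_real t" using s by (simp add: Lg_ell)
    fix s' assume "Lg (complex_of_real s') = complex_of_real t"
    then have "ell s' = t" by (simp add: Lg_ell)
    then show "s' = s" by (rule inj)
  qed
  then show ?thesis using s \<open>s \<noteq> 0\<close> by auto
qed

end

lemma Phi_props:
  assumes "0 < lam" "lam < exp (-1)"
  shows "\<exists>B>0. (\<forall>t. t > B \<longrightarrow> Phi_inv lam t > 0) \<and>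
     (\<forall>t1 t2. B < t1 \<longrightarrow> t1 \<le> t2 \<longrightarrow> Phi_inv lam t1 \<le> Phi_inv lam t2)"
proof -
  interpret lamctx lam using assms by unfold_locales
  show ?thesis
  proof (intro exI[of _ b] conjI allI impI)
    show "b > 0" using b_gt1 by simp
    fix t assume "t > b" then show "Phi_inv lam t > 0" using Phi_eq by blast
  next
    fix t1 t2 assume t: "b < t1" "t1 \<le> t2"
    obtain s1 where s1: "ell s1 = t1" "Phi_inv lam t1 = s1" using Phi_eq[OF t(1)] by blast
    obtain s2 where s2: "ell s2 = t2" "Phi_inv lam t2 = s2" using Phi_eq[of t2] t by auto
    show "Phi_inv lam t1 \<le> Phi_inv lam t2"
    proof (rule ccontr)
      assume "\<not> ?thesis"
      then have "s2 < s1" using s1 s2 by simp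
      then have "t2 < t1" using ell_strict s1 s2 by blast
      then show False using t by simp
    qed
  qed
qed

lemma gauge_growth:
  assumes "0 < lam" "lam < exp (-1)" "0 < gam" "K \<ge> 1"
  shows "\<exists>d0>0. \<forall>d. 0 < d \<longrightarrow> d < d0 \<longrightarrow> gauge_h lam gam (2*K*d) \<le> 4*K^2 * gauge_h lam gam d"
proof -
  obtain B where B: "B > 0" "\<And>t. t > B \<Longrightarrow> Phi_inv lam t > 0"
     "\<And>t1 t2. B < t1 \<Longrightarrow> t1 \<le> t2 \<Longrightarrow> Phi_inv lam t1 \<le> Phi_inv lam t2"
    using Phi_props[OF assms(1,2)] by blast
  show ?thesis
  proof (intro exI[of _ "1/(2*K*B)"] conjI allI impI)
    show "0 < 1/(2*K*B)" using B assms(4) by simp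
    fix d :: real assume d: "0 < d" "d < 1/(2*K*B)"
    have Kp: "K > 0" using assms(4) by simp
    have t1: "B < 1/(2*K*d)" using d Kp B(1) by (simp add: field_simps)
    have t12: "1/(2*K*d) \<le> 1/d" using d assms(4) by (simp add: field_simps)
    have p1: "Phi_inv lam (1/(2*K*d)) > 0" using B(2) t1 by blast
    have m: "Phi_inv lam (1/(2*K*d)) powr gam \<le> Phi_inv lam (1/d) powr gam"
      using B(3)[OF t1 t12] p1 assms(3) by (intro powr_mono2) auto
    have "gauge_h lam gam (2*K*d) = (2*K*d)^2 * Phi_inv lam (1/(2*K*d)) powr gam"
    proof -
      have "\<not> 2*K*d \<le> 0" using d Kp by (simp add: not_le)
      then show ?thesis unfolding gauge_h_def by simp
    qed
    also have "\<dots> \<le> (2*K*d)^2 * Phi_inv lam (1/d) powr gam"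
      using m by (intro mult_left_mono) auto
    also have "\<dots> = 4*K^2 * gauge_h lam gam d"
      using d unfolding gauge_h_def by (simp add: power_mult_distrib)
    finally show "gauge_h lam gam (2*K*d) \<le> 4*K^2 * gauge_h lam gam d" .
  qed
qed

lemma gauge_nonneg: "gauge_h lam gam t \<ge> 0"
  unfolding gauge_h_def by simp

lemma haus_lip_gauge:
  fixes g :: "complex \<Rightarrow> complex"
  assumes "0 < lam" "lam < exp (-1)" "0 < gam"
    and lip: "\<And>x y. x \<in> A \<Longrightarrow> y \<in> A \<Longrightarrow> norm (g x - g y) \<le> K * norm (x - y)" and K: "K \<ge> 1"
  shows "hausdorff_gauge (gauge_h lam gam) (g ` A) \<le> ennreal (4*K^2) * hausdorff_gauge (gauge_h lam gam) A"
proof -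
  obtain d0 where d0: "d0 > 0" "\<And>d. 0 < d \<Longrightarrow> d < d0 \<Longrightarrow> gauge_h lam gam (2*K*d) \<le> 4*K^2 * gauge_h lam gam d"
    using gauge_growth[OF assms(1-3) K] by blast
  show ?thesis
  proof (rule haus_lip[OF lip K])
    show "0 < 4*K^2" using K by simp
    show "0 < d0" by (rule d0(1))
    show "gauge_h lam gam 0 = 0" by (simp add: gauge_h_def)
    show "\<And>t. 0 \<le> gauge_h lam gam t" by (rule gauge_nonneg)
    show "\<And>d. 0 < d \<Longrightarrow> d < d0 \<Longrightarrow> gauge_h lam gam (2*K*d) \<le> 4*K^2 * gauge_h lam gam d" by (rule d0(2))
  qed
qed

theorem mainTheorem4:
  fixes lam gam :: real and A :: "complex set" and f :: "complex \<Rightarrow> complex"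
  assumes "0 < lam" "lam < exp (-1)" "0 < gam" "bilipschitz f"
  shows "(hausdorff_gauge (gauge_h lam gam) A = 0 \<longrightarrow> hausdorff_gauge (gauge_h lam gam) (f ` A) = 0)
       \<and> (hausdorff_gauge (gauge_h lam gam) A = \<infinity> \<longrightarrow> hausdorff_gauge (gauge_h lam gam) (f ` A) = \<infinity>)"
proof -
  obtain c C where cC: "0 < c" "c < C"
    and b: "\<And>x y. x \<noteq> y \<Longrightarrow> c \<le> cmod (f x - f y) / cmod (x - y) \<and> cmod (f x - f y) / cmod (x - y) \<le> C"
    using assms(4) unfolding bilipschitz_def by blast
  have up: "cmod (f x - f y) \<le> C * cmod (x - y)" for x y
  proof (cases "x = y")
    case False
    then have "cmod (f x - f y) / cmod (x - y) \<le> C" using b by blast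
    then show ?thesis using False by (simp add: divide_le_eq)
  qed simp
  have lo: "c * cmod (x - y) \<le> cmod (f x - f y)" for x y
  proof (cases "x = y")
    case False
    then have "c \<le> cmod (f x - f y) / cmod (x - y)" using b by blast
    then show ?thesis using False by (simp add: le_divide_eq)
  qed simp
  define K1 where "K1 = max C 1"
  have K1: "K1 \<ge> 1" "\<And>x y. cmod (f x - f y) \<le> K1 * cmod (x - y)"
    unfolding K1_def using up by (auto intro: order_trans[OF _ mult_right_mono[of C "max C 1"]])
  have inj: "inj f"
  proof (rule injI)
    fix x y assume "f x = f y"
    then show "x = y" using lo[of x y] cC by (simp add: mult_le_0_iff)
  qed
  define g where "g = inv f"
  have gf: "g (f x) = x" for x unfolding g_def using inj by simp
  define K2 where "K2 = max (1/c) 1"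
  have K2: "K2 \<ge> 1" by (simp add: K2_def)
  have lip2: "cmod (g u - g v) \<le> K2 * cmod (u - v)" if uv: "u \<in> f ` A" "v \<in> f ` A" for u v
  proof -
    obtain x where "u = f x" using uv(1) by auto
    obtain y where "v = f y" using uv(2) by auto
    have "cmod (g u - g v) = cmod (x - y)" using \<open>u = f x\<close> \<open>v = f y\<close> by (simp add: gf)
    also have "\<dots> \<le> (1/c) * cmod (u - v)" using lo[of x y] cC \<open>u = f x\<close> \<open>v = f y\<close>
      by (simp add: field_simps)
    also have "\<dots> \<le> K2 * cmod (u - v)" unfolding K2_def by (intro mult_right_mono) auto
    finally show ?thesis .
  qed
  have gA: "g ` f ` A = A" by (simp add: image_image gf)
  have H1: "hausdorff_gauge (gauge_h lam gam) (f ` A) \<le> ennreal (4*K1^2) * hausdorff_gauge (gauge_h lam gam) A"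
    using haus_lip_gauge[OF assms(1-3) _ K1(1), of A f] K1(2) by blast
  have H2: "hausdorff_gauge (gauge_h lam gam) A \<le> ennreal (4*K2^2) * hausdorff_gauge (gauge_h lam gam) (f ` A)"
    using haus_lip_gauge[OF assms(1-3), of "f ` A" g K2] lip2 K2 gA by simp
  show ?thesis
  proof (intro conjI impI)
    assume "hausdorff_gauge (gauge_h lam gam) A = 0"
    then show "hausdorff_gauge (gauge_h lam gam) (f ` A) = 0" using H1 by simp
  next
    assume inf: "hausdorff_gauge (gauge_h lam gam) A = \<infinity>"
    show "hausdorff_gauge (gauge_h lam gam) (f ` A) = \<infinity>"
    proof (rule ccontr)
      assume "hausdorff_gauge (gauge_h lam gam) (f ` A) \<noteq> \<infinity>"
      then have "ennreal (4*K2^2) * hausdorff_gauge (gauge_h lam gam) (f ` A) < \<infinity>"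
        by (simp add: ennreal_mult_less_top less_top)
      then show False using H2 inf by simp
    qed
  qed
qed

end
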